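(* Fix $0<b_1<b_2<1$ and an integer $N\ge1$. Let $\{\chi_t(x)\}$ and $\{j_t(x)\}$, $(x,t)\in\mathbb Z\times\{1,\dots,N\}$, be mutually independent, with $P[\chi_t(x)=1]=b_1=1-P[\chi_t(x)=0]$ and $P[j_t(x)=r]=(1-b_2)b_2^{r-1}$ for $r\ge1$. Call an integer $k$ separating if, for each $t\in[1,N]$, $\chi_t(k+t)=0$ and $\max_{m<k+t}(j_t(m)+m)\le k+t$. Then almost surely there exists a doubly infinite sequence of integers $\cdots<R_{-1}<R_0<R_1<\cdots$ such that every $R_i$ is separating. *)

theory Defs
  imports "HOL-Probability.Probability"
begin

definition separating ::
  "nat \<Rightarrow> (int \<Rightarrow> nat \<Rightarrow> 'a \<Rightarrow> nat) \<Rightarrow> (int \<Rightarrow> nat \<Rightarrow> 'a \<Rightarrow> nat) \<Rightarrow> 'a \<Rightarrow> int \<Rightarrow> bool"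
where
  "separating N chi j w k \<longleftrightarrow>
     (\<forall>t\<in>{1..N}. chi (k + int t) t w = 0 \<and>
        (\<forall>m < k + int t. int (j m t w) + m \<le> k + int t))"

end

theory Submission
  imports Defs "HOL-Probability.Probability"
begin

lemma geo_sum:
  fixes b :: real
  shows "(\<Sum>r\<in>{1..d}. (1 - b) * b ^ (r - 1)) = 1 - b ^ d"
proof (induction d)
  case 0 then show ?case by simp
next
  case (Suc d)
  have "{1..Suc d} = insert (Suc d) {1..d}" by auto
  then show ?case using Suc by (simp add: algebra_simps)
qed

lemma prod_lower:
  fixes x :: real
  assumes x0: "0 \<le> x" and x1: "x < 1"
  shows "\<exists>c>0. \<forall>n. c \<le> (\<Prod>d\<in>{1..n}. 1 - x ^ d)"
proof -
  define P where "P n = (\<Prod>d\<in>{1..n}. 1 - x ^ d)" for n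
  have fac: "0 < 1 - x ^ d" if "d \<ge> 1" for d :: nat
  proof -
    have "x ^ d \<le> x" using that x0 x1 by (simp add: power_le_one power_decreasing_iff)
      (metis One_nat_def less_eq_real_def power_decreasing power_one_right)
    then show ?thesis using x1 by simp
  qed
  have Ppos: "0 < P n" for n unfolding P_def by (rule prod_pos) (use fac in auto)
  have Psuc: "P (Suc n) = P n * (1 - x ^ Suc n)" for n
  proof -
    have "{1..Suc n} = insert (Suc n) {1..n}" by auto
    then show ?thesis unfolding P_def by simp
  qed
  have Pdec: "P n \<le> P m" if "m \<le> n" for m n
    using that
  proof (induction n)
    case 0 then show ?case by simp
  next
    case (Suc n)
    show ?case
    proof (cases "m = Suc n")
      case True then show ?thesis by simp
    next
      case False
      then have "P n \<le> P m" using Suc by simp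
      moreover have "P (Suc n) \<le> P n" using Psuc[of n] Ppos[of n] x0
        by (simp add: mult_left_le)
      ultimately show ?thesis by simp
    qed
  qed
  obtain D where D: "x ^ D < (1 - x) / 2" using real_arch_pow_inv[of "(1-x)/2" x] x1 by auto
  have geo: "(\<Sum>d\<in>{D+1..D+k}. x ^ d) * (1 - x) = x ^ (D+1) - x ^ (D+k+1)" for k
  proof (induction k)
    case 0 then show ?case by simp
  next
    case (Suc k)
    have e: "{D+1..D+Suc k} = insert (D + Suc k) {D+1..D+k}" by auto
    have "(\<Sum>d\<in>{D+1..D+Suc k}. x ^ d) = x ^ (D + Suc k) + (\<Sum>d\<in>{D+1..D+k}. x ^ d)"
      unfolding e by (subst sum.insert) auto
    then have "(\<Sum>d\<in>{D+1..D+Suc k}. x ^ d) * (1 - x) = x ^ (D + Suc k) * (1 - x) + (x ^ (D+1) - x ^ (D+k+1))"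
      using Suc by (simp add: distrib_right)
    also have "\<dots> = x ^ (D+1) - x ^ (D + Suc k + 1)" by (simp add: algebra_simps)
    finally show ?case .
  qed
  have sumle: "(\<Sum>d\<in>{D+1..D+k}. x ^ d) \<le> 1/2" for k
  proof -
    have "(\<Sum>d\<in>{D+1..D+k}. x ^ d) * (1 - x) \<le> x ^ D"
    proof -
      have "x * x ^ D \<le> x ^ D" using x0 x1 by (simp add: mult_left_le_one_le)
      moreover have "0 \<le> x * x ^ (D + k)" using x0 by simp
      ultimately show ?thesis unfolding geo by simp
    qed
    also have "\<dots> \<le> (1/2) * (1 - x)" using D by simp
    finally have "(\<Sum>d\<in>{D+1..D+k}. x ^ d) * (1 - x) \<le> (1/2) * (1 - x)" .
    moreover have "0 < 1 - x" using x1 by simp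
    ultimately show ?thesis by (rule mult_right_le_imp_le)
  qed
  have step: "P D * (1 - (\<Sum>d\<in>{D+1..D+k}. x ^ d)) \<le> P (D + k)" for k
  proof (induction k)
    case 0 then show ?case by simp
  next
    case (Suc k)
    let ?S = "(\<Sum>d\<in>{D+1..D+k}. x ^ d)"
    have e: "{D+1..D+Suc k} = insert (D + Suc k) {D+1..D+k}" by auto
    have S0: "0 \<le> ?S" using x0 by (simp add: sum_nonneg)
    have a0: "0 \<le> x ^ (D + Suc k)" "x ^ (D + Suc k) < 1" using x0 x1 fac[of "D + Suc k"] by auto
    have "P D * (1 - (?S + x ^ (D + Suc k))) \<le> P D * ((1 - ?S) * (1 - x ^ (D + Suc k)))"
      using Ppos[of D] S0 a0 x0 by (intro mult_left_mono) (auto simp: algebra_simps)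
    also have "\<dots> = (P D * (1 - ?S)) * (1 - x ^ (D + Suc k))" by simp
    also have "\<dots> \<le> P (D + k) * (1 - x ^ (D + Suc k))"
      using Suc a0 by (intro mult_right_mono) auto
    also have "\<dots> = P (D + Suc k)" using Psuc[of "D + k"] by simp
    finally show ?case using e by (simp add: add.commute)
  qed
  have "P D / 2 \<le> P n" for n
  proof (cases "n \<le> D")
    case True then show ?thesis using Pdec[OF True] Ppos[of D] by simp
  next
    case False
    then obtain k where k: "n = D + k" by (metis le_add_diff_inverse nat_le_linear)
    have "P D / 2 \<le> P D * (1 - (\<Sum>d\<in>{D+1..D+k}. x ^ d))"
      using sumle[of k] Ppos[of D] by (simp add: field_simps)
    then show ?thesis using step[of k] k by simp
  qed
  then have "\<forall>n. P D / 2 \<le> (\<Prod>d\<in>{1..n}. 1 - x ^ d)" unfolding P_def by blast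
  moreover have "P D / 2 > 0" using Ppos[of D] by simp
  ultimately show ?thesis by blast
qed


lemma strict_mono_int_step:
  fixes R :: "int \<Rightarrow> int"
  assumes "\<And>i. R i < R (i + 1)"
  shows "strict_mono R"
proof (rule strict_monoI)
  fix a b :: int assume "a < b"
  define n where "n = nat (b - a - 1)"
  have n: "b = a + int (Suc n)" unfolding n_def using \<open>a < b\<close> by simp
  have "R a < R (a + int (Suc n))" for n
  proof (induction n)
    case 0 then show ?case using assms[of a] by simp
  next
    case (Suc n)
    have "R (a + int (Suc n)) < R (a + int (Suc n) + 1)" by (rule assms)
    moreover have "a + int (Suc n) + 1 = a + int (Suc (Suc n))" by simp
    ultimately show ?case using Suc.IH by (metis order.strict_trans)
  qed
  then show "R a < R b" using n by simp
qed

lemma mk_R: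
  fixes S :: "int set"
  assumes up: "\<forall>b. \<exists>k\<in>S. b < k" and down: "\<forall>b. \<exists>k\<in>S. k < b"
  shows "\<exists>R :: int \<Rightarrow> int. strict_mono R \<and> (\<forall>i. R i \<in> S)"
proof -
  define f where "f b = (SOME k. k \<in> S \<and> b < k)" for b
  define g where "g b = (SOME k. k \<in> S \<and> k < b)" for b
  have f: "f b \<in> S \<and> b < f b" for b
    unfolding f_def by (rule someI_ex) (use up in blast)
  have g: "g b \<in> S \<and> g b < b" for b
    unfolding g_def by (rule someI_ex) (use down in blast)
  obtain s0 where s0: "s0 \<in> S" using up by blast
  define R where "R i = (if 0 \<le> i then (f ^^ nat i) s0 else (g ^^ nat (- i)) s0)" for i
  have inS: "R i \<in> S" for i
  proof -
    have "(f ^^ n) s0 \<in> S" for n by (cases n) (use s0 f in simp_all)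
    moreover have "(g ^^ n) s0 \<in> S" for n by (cases n) (use s0 g in simp_all)
    ultimately show ?thesis unfolding R_def by auto
  qed
  have "R i < R (i + 1)" for i
  proof (cases "0 \<le> i")
    case True
    then have "nat (i + 1) = Suc (nat i)" by simp
    then have "R (i + 1) = f (R i)" unfolding R_def using True by simp
    then show ?thesis using f[of "R i"] by simp
  next
    case False
    show ?thesis
    proof (cases "i = -1")
      case True
      then have "R i = g (R (i + 1))" unfolding R_def by simp
      then show ?thesis using g[of "R (i+1)"] by simp
    next
      case False
      with \<open>\<not> 0 \<le> i\<close> have "nat (- i) = Suc (nat (- (i + 1)))" "\<not> 0 \<le> i + 1" by auto
      then have "R i = g (R (i + 1))" unfolding R_def using \<open>\<not> 0 \<le> i\<close> by simp
      then show ?thesis using g[of "R (i+1)"] by simp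
    qed
  qed
  then have "strict_mono R" by (rule strict_mono_int_step)
  then have "strict_mono R \<and> (\<forall>i. R i \<in> S)" using inS by blast
  then show ?thesis by blast
qed


locale sepl = prob_space M for M :: "'a measure" +
  fixes b1 b2 :: real and N :: nat and chi j :: "int \<Rightarrow> nat \<Rightarrow> 'a \<Rightarrow> nat"
  assumes b1: "0 < b1" and b12: "b1 < b2" and b2: "b2 < 1" and N1: "N \<ge> 1"
    and ind: "indep_vars (\<lambda>_. count_space UNIV)
           (case_sum (\<lambda>(x, t). chi x t) (\<lambda>(x, t). j x t))
           ((UNIV \<times> {1..N}) <+> (UNIV \<times> {1..N}))"
    and chid: "\<forall>x. \<forall>t\<in>{1..N}. measure M {w \<in> space M. chi x t w = 1} = b1
                       \<and> measure M {w \<in> space M. chi x t w = 0} = 1 - b1"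
    and jd: "\<forall>x. \<forall>t\<in>{1..N}. \<forall>r::nat. r \<ge> 1 \<longrightarrow>
           measure M {w \<in> space M. j x t w = r} = (1 - b2) * b2 ^ (r - 1)"
begin

definition "X = case_sum (\<lambda>(x, t). chi x t) (\<lambda>(x, t). j x t)"
definition "II = (UNIV \<times> {1..N}) <+> (UNIV \<times> {1..N})"
definition "E v = {X v -` A \<inter> space M | A. A \<in> sets (count_space (UNIV :: nat set))}"

lemma indE: "indep_sets E II"
  using ind unfolding indep_vars_def2 X_def II_def E_def by simp

lemma rv: "v \<in> II \<Longrightarrow> X v \<in> measurable M (count_space UNIV)"
  using ind unfolding indep_vars_def2 X_def II_def by simp

lemma E_Int_stable: "Int_stable (E v)"
  unfolding Int_stable_def E_def
proof (intro ballI)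
  fix a b assume "a \<in> {X v -` A \<inter> space M |A. A \<in> sets (count_space UNIV)}"
    "b \<in> {X v -` A \<inter> space M |A. A \<in> sets (count_space UNIV)}"
  then obtain A B where "a = X v -` A \<inter> space M" "b = X v -` B \<inter> space M" by auto
  then have "a \<inter> b = X v -` (A \<inter> B) \<inter> space M" by auto
  then show "a \<inter> b \<in> {X v -` A \<inter> space M |A. A \<in> sets (count_space UNIV)}"
    by (intro CollectI exI[of _ "A \<inter> B"]) simp
qed

lemma E_events: "v \<in> II \<Longrightarrow> E v \<subseteq> events"
  using indE unfolding indep_sets_def by auto

lemma chi_set_E: "{w \<in> space M. P (chi x t w)} \<in> E (Inl (x, t))"
proof -
  have "{w \<in> space M. P (chi x t w)} = X (Inl (x, t)) -` {r. P r} \<inter> space M"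
    unfolding X_def by auto
  then show ?thesis unfolding E_def by (intro CollectI exI[of _ "{r. P r}"]) simp
qed

lemma j_set_E: "{w \<in> space M. P (j x t w)} \<in> E (Inr (x, t))"
proof -
  have "{w \<in> space M. P (j x t w)} = X (Inr (x, t)) -` {r. P r} \<inter> space M"
    unfolding X_def by auto
  then show ?thesis unfolding E_def by (intro CollectI exI[of _ "{r. P r}"]) simp
qed

lemma j_set_ev: "t \<in> {1..N} \<Longrightarrow> {w \<in> space M. P (j x t w)} \<in> events"
  using E_events[of "Inr (x, t)"] j_set_E[of P x t] unfolding II_def by blast

lemma chi_set_ev: "t \<in> {1..N} \<Longrightarrow> {w \<in> space M. P (chi x t w)} \<in> events"
  using E_events[of "Inl (x, t)"] chi_set_E[of P x t] unfolding II_def by blast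

lemma jle: assumes t: "t \<in> {1..N}" shows "1 - b2 ^ d \<le> prob {w \<in> space M. j m t w \<le> d}"
proof -
  have "prob (\<Union>r\<in>{1..d}. {w \<in> space M. j m t w = r}) = (\<Sum>r\<in>{1..d}. prob {w \<in> space M. j m t w = r})"
    by (rule finite_measure_finite_Union) (auto simp: disjoint_family_on_def intro!: j_set_ev t)
  also have "\<dots> = (\<Sum>r\<in>{1..d}. (1 - b2) * b2 ^ (r - 1))"
    using jd t by (intro sum.cong) auto
  also have "\<dots> = 1 - b2 ^ d" by (rule geo_sum)
  finally have "prob (\<Union>r\<in>{1..d}. {w \<in> space M. j m t w = r}) = 1 - b2 ^ d" .
  moreover have "prob (\<Union>r\<in>{1..d}. {w \<in> space M. j m t w = r}) \<le> prob {w \<in> space M. j m t w \<le> d}"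
    by (rule finite_measure_mono) (auto intro!: j_set_ev t)
  ultimately show ?thesis by simp
qed

lemma jgt: assumes t: "t \<in> {1..N}" shows "prob {w \<in> space M. d < j m t w} \<le> b2 ^ d"
proof -
  have "{w \<in> space M. d < j m t w} = space M - {w \<in> space M. j m t w \<le> d}" by auto
  then have "prob {w \<in> space M. d < j m t w} = 1 - prob {w \<in> space M. j m t w \<le> d}"
    using prob_compl[OF j_set_ev[OF t]] by simp
  then show ?thesis using jle[OF t, of d m] by simp
qed


definition "Aset K L = {w \<in> space M. \<forall>t\<in>{1..N}. chi (K + int t) t w = 0 \<and>
   (\<forall>m\<in>{K - int L..<K + int t}. int (j m t w) + m \<le> K + int t)}"

definition "Vset K L = Inl ` ((\<lambda>t. (K + int t, t)) ` {1..N}) \<union>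
   Inr ` ((\<lambda>(t, m). (m, t)) ` (SIGMA t:{1..N}. {K - int L..<K + int t}))"

definition "Sv K v = (case v of Inl _ \<Rightarrow> {0} | Inr (m, t) \<Rightarrow> {r. int r + m \<le> K + int t})"

definition "Dset K v = X v -` Sv K v \<inter> space M"

lemma Vset_II: "Vset K L \<subseteq> II"
  unfolding Vset_def II_def by auto

lemma Vset_fin: "finite (Vset K L)"
  unfolding Vset_def by auto

lemma Vset_ne: "Vset K L \<noteq> {}"
  using N1 unfolding Vset_def by auto

lemma Dset_E: "Dset K v \<in> E v"
  unfolding Dset_def E_def by (intro CollectI exI[of _ "Sv K v"]) simp

lemma Aset_eq: "Aset K L = (\<Inter>v\<in>Vset K L. Dset K v)"
proof (rule set_eqI)
  fix w
  show "w \<in> Aset K L \<longleftrightarrow> w \<in> (\<Inter>v\<in>Vset K L. Dset K v)"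
  proof
    assume "w \<in> Aset K L" then show "w \<in> (\<Inter>v\<in>Vset K L. Dset K v)"
      unfolding Aset_def Vset_def Dset_def Sv_def X_def using N1 by auto
  next
    assume h: "w \<in> (\<Inter>v\<in>Vset K L. Dset K v)"
    obtain v0 where "v0 \<in> Vset K L" using Vset_ne by blast
    then have sp: "w \<in> space M" using h unfolding Dset_def by blast
    have c: "chi (K + int t) t w = 0" if t: "t \<in> {1..N}" for t
    proof -
      have "Inl (K + int t, t) \<in> Vset K L" unfolding Vset_def using t by auto
      then have "w \<in> Dset K (Inl (K + int t, t))" using h by blast
      then show ?thesis by (simp add: Dset_def Sv_def X_def)
    qed
    have jj: "int (j m t w) + m \<le> K + int t" if t: "t \<in> {1..N}" and m: "m \<in> {K - int L..<K + int t}" for t m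
    proof -
      have "(t, m) \<in> (SIGMA t:{1..N}. {K - int L..<K + int t})" using t m by auto
      then have "Inr (m, t) \<in> Vset K L" unfolding Vset_def by force
      then have "w \<in> Dset K (Inr (m, t))" using h by blast
      then show ?thesis by (simp add: Dset_def Sv_def X_def)
    qed
    show "w \<in> Aset K L" unfolding Aset_def using sp c jj by blast
  qed
qed

lemma inner_prod:
  assumes t: "t \<in> {1..N}"
  shows "(\<Prod>m\<in>{K - int L..<K + int t}. 1 - b2 ^ nat (K + int t - m)) = (\<Prod>d\<in>{1..L+t}. 1 - b2 ^ d)"
  by (rule prod.reindex_bij_witness[where i="\<lambda>d. K + int t - int d" and j="\<lambda>m. nat (K + int t - m)"])
     (use t in auto)

lemma probA_lower: "\<exists>c>0. \<forall>K L. c \<le> prob (Aset K L)"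
proof -
  have b2pos: "0 < b2" using b1 b12 by simp
  obtain cq where cq: "cq > 0" "\<And>n. cq \<le> (\<Prod>d\<in>{1..n}. 1 - b2 ^ d)"
    using prod_lower[of b2] b2pos b2 by auto
  have pw: "b2 ^ d \<le> 1" for d :: nat using b2pos b2 by (simp add: power_le_one)
  have "(1 - b1) ^ N * cq ^ N \<le> prob (Aset K L)" for K L
  proof -
    let ?V = "Vset K L"
    let ?T1 = "(\<lambda>t. (K + int t, t)) ` {1..N}"
    let ?Sig = "SIGMA t:{1..N}. {K - int L..<K + int t}"
    let ?T2 = "(\<lambda>(t, m). (m, t)) ` ?Sig"
    have "prob (Aset K L) = (\<Prod>v\<in>?V. prob (Dset K v))"
      unfolding Aset_eq
      by (rule indep_setsD[OF indE Vset_II Vset_ne Vset_fin]) (simp add: Dset_E)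
    also have "\<dots> = (\<Prod>v\<in>Inl ` ?T1. prob (Dset K v)) * (\<Prod>v\<in>Inr ` ?T2. prob (Dset K v))"
      unfolding Vset_def by (rule prod.union_disjoint) auto
    also have "(\<Prod>v\<in>Inl ` ?T1. prob (Dset K v)) = (\<Prod>t\<in>{1..N}. prob (Dset K (Inl (K + int t, t))))"
      by (subst prod.reindex) (auto simp: inj_on_def intro!: prod.reindex_cong[where l="\<lambda>t. (K + int t, t)"])
    also have "\<dots> = (\<Prod>t\<in>{1..N}. 1 - b1)"
    proof (rule prod.cong[OF refl])
      fix t assume t: "t \<in> {1..N}"
      have "Dset K (Inl (K + int t, t)) = {w \<in> space M. chi (K + int t) t w = 0}"
        unfolding Dset_def Sv_def X_def by auto
      then show "prob (Dset K (Inl (K + int t, t))) = 1 - b1" using chid t by simp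
    qed
    also have "\<dots> = (1 - b1) ^ N" by simp
    also have "(\<Prod>v\<in>Inr ` ?T2. prob (Dset K v)) = (\<Prod>q\<in>?Sig. prob (Dset K (Inr (snd q, fst q))))"
      by (subst prod.reindex) (auto simp: inj_on_def intro!: prod.reindex_cong[where l="\<lambda>(t, m). (m, t)"])
    also have "\<dots> = (\<Prod>t\<in>{1..N}. \<Prod>m\<in>{K - int L..<K + int t}. prob (Dset K (Inr (m, t))))"
      by (simp add: prod.Sigma split_beta)
    finally have eq: "prob (Aset K L) = (1 - b1) ^ N *
        (\<Prod>t\<in>{1..N}. \<Prod>m\<in>{K - int L..<K + int t}. prob (Dset K (Inr (m, t))))" .
    have "cq ^ N = (\<Prod>t\<in>{1..N}. cq)" by simp
    also have "\<dots> \<le> (\<Prod>t\<in>{1..N}. \<Prod>m\<in>{K - int L..<K + int t}. prob (Dset K (Inr (m, t))))"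
    proof (rule prod_mono)
      fix t assume t: "t \<in> {1..N}"
      have "cq \<le> (\<Prod>m\<in>{K - int L..<K + int t}. 1 - b2 ^ nat (K + int t - m))"
        unfolding inner_prod[OF t] by (rule cq)
      also have "\<dots> \<le> (\<Prod>m\<in>{K - int L..<K + int t}. prob (Dset K (Inr (m, t))))"
      proof (rule prod_mono)
        fix m assume m: "m \<in> {K - int L..<K + int t}"
        have "Dset K (Inr (m, t)) = {w \<in> space M. j m t w \<le> nat (K + int t - m)}"
          unfolding Dset_def Sv_def X_def using m by auto
        then show "0 \<le> 1 - b2 ^ nat (K + int t - m) \<and> 1 - b2 ^ nat (K + int t - m) \<le> prob (Dset K (Inr (m, t)))"
          using jle[OF t] pw by simp
      qed
      finally show "0 \<le> cq \<and> cq \<le> (\<Prod>m\<in>{K - int L..<K + int t}. prob (Dset K (Inr (m, t))))"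
        using cq by simp
    qed
    finally have "cq ^ N \<le> (\<Prod>t\<in>{1..N}. \<Prod>m\<in>{K - int L..<K + int t}. prob (Dset K (Inr (m, t))))" .
    then show ?thesis unfolding eq using b12 b2 by (intro mult_left_mono) auto
  qed
  moreover have "(1 - b1) ^ N * cq ^ N > 0" using cq b12 b2 by simp
  ultimately show ?thesis by blast
qed


lemma small_zero:
  fixes p x C :: real
  assumes "0 \<le> x" "x < 1" "0 < C" "\<And>n. p \<le> C * x ^ n"
  shows "p \<le> 0"
proof (rule ccontr)
  assume "\<not> p \<le> 0"
  then have "p / C > 0" using assms by simp
  then obtain n where "x ^ n < p / C" using real_arch_pow_inv[of "p / C" x] assms by auto
  then have "C * x ^ n < p" using assms by (simp add: field_simps)
  then show False using assms(4)[of n] by simp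
qed

lemma Dset_ev: "v \<in> II \<Longrightarrow> Dset K v \<in> events"
  using E_events Dset_E by blast

lemma Aset_ev: "Aset K L \<in> events"
  unfolding Aset_eq
  by (rule sets.finite_INT[OF Vset_fin Vset_ne]) (use Dset_ev Vset_II in blast)

definition "Bset K L = {w \<in> space M. \<exists>t\<in>{1..N}. \<exists>m. m < K - int L \<and> K + int t < int (j m t w) + m}"

definition "Gset K L t k = {w \<in> space M. L + 1 + k + t < j (K - int L - 1 - int k) t w}"

lemma Bset_eq: "Bset K L = (\<Union>t\<in>{1..N}. \<Union>k. Gset K L t k)"
proof (rule set_eqI)
  fix w
  show "w \<in> Bset K L \<longleftrightarrow> w \<in> (\<Union>t\<in>{1..N}. \<Union>k. Gset K L t k)"
  proof
    assume "w \<in> Bset K L"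
    then obtain t m where w: "w \<in> space M" "t \<in> {1..N}" "m < K - int L" "K + int t < int (j m t w) + m"
      unfolding Bset_def by blast
    define k where "k = nat (K - int L - 1 - m)"
    have mk: "m = K - int L - 1 - int k" unfolding k_def using w(3) by simp
    have "L + 1 + k + t < j (K - int L - 1 - int k) t w" using w(4) unfolding mk[symmetric]
      using mk by linarith
    then show "w \<in> (\<Union>t\<in>{1..N}. \<Union>k. Gset K L t k)" unfolding Gset_def using w by blast
  next
    assume "w \<in> (\<Union>t\<in>{1..N}. \<Union>k. Gset K L t k)"
    then obtain t k where w: "w \<in> space M" "t \<in> {1..N}" "L + 1 + k + t < j (K - int L - 1 - int k) t w"
      unfolding Gset_def by blast
    then show "w \<in> Bset K L" unfolding Bset_def
      by (intro CollectI conjI bexI[of _ t] exI[of _ "K - int L - 1 - int k"]) linarith+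
  qed
qed

lemma Gset_ev: "t \<in> {1..N} \<Longrightarrow> Gset K L t k \<in> events"
  unfolding Gset_def by (rule j_set_ev)

lemma Bset_ev: "Bset K L \<in> events"
  unfolding Bset_eq using Gset_ev by blast

lemma b2pos: "0 < b2" using b1 b12 by simp

lemma Bset_prob: "prob (Bset K L) \<le> real N * (b2 ^ L / (1 - b2))"
proof -
  have G: "prob (Gset K L t k) \<le> b2 ^ L * b2 ^ k" if t: "t \<in> {1..N}" for t k
  proof -
    have "prob (Gset K L t k) \<le> b2 ^ (L + 1 + k + t)" unfolding Gset_def by (rule jgt[OF t])
    also have "\<dots> \<le> b2 ^ (L + k)" using b2pos b2 by (intro power_decreasing) auto
    finally show ?thesis by (simp add: power_add)
  qed
  have sg: "summable (\<lambda>k. b2 ^ L * b2 ^ k)" using b2pos b2 by (intro summable_mult summable_geometric) simp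
  have U: "prob (\<Union>k. Gset K L t k) \<le> b2 ^ L / (1 - b2)" if t: "t \<in> {1..N}" for t
  proof -
    have sG: "summable (\<lambda>k. prob (Gset K L t k))"
      by (rule summable_comparison_test'[OF sg]) (use G[OF t] in simp)
    have "prob (\<Union>k. Gset K L t k) \<le> (\<Sum>k. prob (Gset K L t k))"
      by (rule finite_measure_subadditive_countably) (use Gset_ev[OF t] sG in auto)
    also have "\<dots> \<le> (\<Sum>k. b2 ^ L * b2 ^ k)" by (rule suminf_le[OF _ sG sg]) (use G[OF t] in simp)
    also have "\<dots> = b2 ^ L * (1 / (1 - b2))"
      using b2pos b2 by (subst suminf_mult) (auto simp: suminf_geometric)
    finally show ?thesis by simp
  qed
  have "prob (Bset K L) \<le> (\<Sum>t\<in>{1..N}. prob (\<Union>k. Gset K L t k))"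
    unfolding Bset_eq by (rule finite_measure_subadditive_finite) (use Gset_ev in auto)
  also have "\<dots> \<le> (\<Sum>t\<in>{1..N}. b2 ^ L / (1 - b2))" by (rule sum_mono) (rule U)
  also have "\<dots> = real N * (b2 ^ L / (1 - b2))" by simp
  finally show ?thesis .
qed


lemma AEB:
  fixes K :: "nat \<Rightarrow> int" and L :: "nat \<Rightarrow> nat"
  assumes Lge: "\<And>i. i \<le> L i"
  shows "AE w in M. \<exists>n. \<forall>i\<ge>n. w \<notin> Bset (K i) (L i)"
proof -
  define Z where "Z = (\<Inter>n. \<Union>k. Bset (K (n + k)) (L (n + k)))"
  have Zev: "Z \<in> events" unfolding Z_def using Bset_ev by blast
  have bound: "prob Z \<le> (real N / (1 - b2) ^ 2) * b2 ^ n" for n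
  proof -
    have Bb: "prob (Bset (K (n + k)) (L (n + k))) \<le> (real N / (1 - b2)) * b2 ^ n * b2 ^ k" for k
    proof -
      have "b2 ^ L (n + k) \<le> b2 ^ (n + k)" using b2pos b2 Lge[of "n + k"] by (intro power_decreasing) auto
      then have "real N * (b2 ^ L (n + k) / (1 - b2)) \<le> real N * (b2 ^ (n + k) / (1 - b2))"
        using b2 by (intro mult_left_mono divide_right_mono) auto
      then show ?thesis using Bset_prob[of "K (n + k)" "L (n + k)"] by (simp add: power_add)
    qed
    have sg: "summable (\<lambda>k. (real N / (1 - b2)) * b2 ^ n * b2 ^ k)"
      using b2pos b2 by (intro summable_mult summable_geometric) simp
    have sB: "summable (\<lambda>k. prob (Bset (K (n + k)) (L (n + k))))"
      by (rule summable_comparison_test'[OF sg]) (use Bb in simp)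
    have "prob Z \<le> prob (\<Union>k. Bset (K (n + k)) (L (n + k)))"
      by (rule finite_measure_mono) (use Bset_ev in \<open>auto simp: Z_def\<close>)
    also have "\<dots> \<le> (\<Sum>k. prob (Bset (K (n + k)) (L (n + k))))"
      by (rule finite_measure_subadditive_countably) (use Bset_ev sB in auto)
    also have "\<dots> \<le> (\<Sum>k. (real N / (1 - b2)) * b2 ^ n * b2 ^ k)" by (rule suminf_le[OF Bb sB sg])
    also have "\<dots> = (real N / (1 - b2)) * b2 ^ n * (1 / (1 - b2))"
      using b2pos b2 by (subst suminf_mult) (auto simp: suminf_geometric)
    also have "\<dots> = (real N / (1 - b2) ^ 2) * b2 ^ n" by (simp add: power2_eq_square)
    finally show ?thesis .
  qed
  have "prob Z \<le> 0"
    by (rule small_zero[of b2 "real N / (1 - b2) ^ 2"]) (use b2pos b2 N1 bound in auto)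
  then have "prob Z = 0" by (simp add: measure_le_0_iff)
  then have null: "Z \<in> null_sets M" using Zev by (simp add: emeasure_eq_measure null_sets_def)
  show ?thesis
  proof (rule AE_I'[OF null], safe)
    fix w assume w: "w \<in> space M" "\<not> (\<exists>n. \<forall>i\<ge>n. w \<notin> Bset (K i) (L i))"
    show "w \<in> Z" unfolding Z_def
    proof (intro InterI, safe)
      fix n
      obtain i where "i \<ge> n" "w \<in> Bset (K i) (L i)" using w(2) by blast
      then have "w \<in> Bset (K (n + (i - n))) (L (n + (i - n)))" by simp
      then show "w \<in> (\<Union>k. Bset (K (n + k)) (L (n + k)))" by blast
    qed
  qed
qed


lemma AEA:
  fixes K :: "nat \<Rightarrow> int" and L :: "nat \<Rightarrow> nat"
  assumes disj: "\<And>i i'. i < i' \<Longrightarrow> K i + int N < K i' - int (L i') \<or> K i' + int N < K i - int (L i)"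
  shows "AE w in M. \<forall>n. \<exists>i\<ge>n. w \<in> Aset (K i) (L i)"
proof -
  define W where "W i = {K i - int (L i) .. K i + int N}" for i
  define J where "J i = {v \<in> II. case_sum fst fst v \<in> W i}" for i
  define C where "C i = space M - Aset (K i) (L i)" for i
  have disjW: "W i \<inter> W i' = {}" if "i < i'" for i i'
    using disj[OF that] unfolding W_def by auto
  have disjJ: "disjoint_family J"
    unfolding disjoint_family_on_def
  proof (intro ballI impI)
    fix i i' :: nat assume "i \<noteq> i'"
    then have "W i \<inter> W i' = {}" using disjW[of i i'] disjW[of i' i] by (cases "i < i'") auto
    then show "J i \<inter> J i' = {}" unfolding J_def by auto
  qed
  have indJ: "indep_sets (\<lambda>i. sigma_sets (space M) (\<Union>v\<in>J i. E v)) UNIV"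
  proof (rule indep_sets_collect_sigma)
    show "indep_sets E (\<Union>i\<in>UNIV. J i)"
      by (rule indep_sets_mono_index[OF _ indE]) (auto simp: J_def)
    show "Int_stable (E v)" for v by (rule E_Int_stable)
    show "disjoint_family J" by (rule disjJ)
  qed
  have VJ: "Vset (K i) (L i) \<subseteq> J i" for i
    using Vset_II[of "K i" "L i"] unfolding Vset_def J_def W_def by auto
  have C_in: "C i \<in> sigma_sets (space M) (\<Union>v\<in>J i. E v)" for i
  proof -
    have sub: "(\<Union>v\<in>J i. E v) \<subseteq> Pow (space M)" unfolding E_def by auto
    interpret S: sigma_algebra "space M" "sigma_sets (space M) (\<Union>v\<in>J i. E v)"
      by (rule sigma_algebra_sigma_sets[OF sub])
    have "Aset (K i) (L i) \<in> sigma_sets (space M) (\<Union>v\<in>J i. E v)"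
      unfolding Aset_eq
    proof (rule S.finite_INT[OF Vset_fin Vset_ne])
      fix v assume "v \<in> Vset (K i) (L i)"
      then have "v \<in> J i" using VJ by blast
      then show "Dset (K i) v \<in> sigma_sets (space M) (\<Union>v\<in>J i. E v)"
        using Dset_E[of "K i" v] by (intro sigma_sets.Basic) blast
    qed
    then show ?thesis unfolding C_def by (rule S.compl_sets)
  qed
  have indC: "indep_events C UNIV"
    unfolding indep_events_def_alt by (rule indep_sets_mono_sets[OF indJ]) (simp add: C_in)
  obtain c where c: "c > 0" "\<And>K L. c \<le> prob (Aset K L)" using probA_lower by blast
  have Cev: "C i \<in> events" for i unfolding C_def using Aset_ev by blast
  have Cp: "prob (C i) \<le> 1 - c" for i
    unfolding C_def using prob_compl[OF Aset_ev] c(2) by simp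
  have c1: "c \<le> 1" using c(2)[of 0 0] prob_le_1[of "Aset 0 0"] by linarith
  have "AE w in M. \<exists>i\<ge>n. w \<in> Aset (K i) (L i)" for n
  proof -
    define Z where "Z = (\<Inter>i\<in>{n..}. C i)"
    have Zev: "Z \<in> events" unfolding Z_def using Cev by (intro sets.countable_INT) auto
    have bound: "prob Z \<le> 1 * (1 - c) ^ m" for m
    proof -
      have "prob Z \<le> prob (\<Inter>i\<in>{n..n+m}. C i)"
        by (rule finite_measure_mono) (auto simp: Z_def intro!: sets.finite_INT Cev)
      also have "\<dots> = (\<Prod>i\<in>{n..n+m}. prob (C i))"
        using indC unfolding indep_events_def by auto
      also have "\<dots> \<le> (\<Prod>i\<in>{n..n+m}. 1 - c)"
        by (rule prod_mono) (use Cp in auto)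
      also have "\<dots> = (1 - c) ^ Suc m" by simp
      also have "\<dots> \<le> (1 - c) ^ m" using c c1 by (intro power_decreasing) auto
      finally show ?thesis by simp
    qed
    have "prob Z \<le> 0"
      by (rule small_zero[of "1 - c" 1]) (use c c1 bound in auto)
    then have "prob Z = 0" by (simp add: measure_le_0_iff)
    then have null: "Z \<in> null_sets M" using Zev by (simp add: emeasure_eq_measure null_sets_def)
    show ?thesis
    proof (rule AE_I'[OF null], safe)
      fix w assume w: "w \<in> space M" "\<not> (\<exists>i\<ge>n. w \<in> Aset (K i) (L i))"
      then show "w \<in> Z" unfolding Z_def C_def by auto
    qed
  qed
  then show ?thesis by (simp add: AE_all_countable)
qed


lemma sep_of:
  assumes a: "w \<in> Aset K L" and b: "w \<notin> Bset K L"
  shows "separating N chi j w K"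
proof -
  have sp: "w \<in> space M" using a unfolding Aset_def by blast
  have a': "\<forall>t\<in>{1..N}. chi (K + int t) t w = 0 \<and>
      (\<forall>m\<in>{K - int L..<K + int t}. int (j m t w) + m \<le> K + int t)"
    using a unfolding Aset_def by blast
  have b': "\<not> (K + int t < int (j m t w) + m)" if "t \<in> {1..N}" "m < K - int L" for t m
    using b sp that unfolding Bset_def by blast
  show ?thesis unfolding separating_def
  proof (intro ballI conjI allI impI)
    fix t assume t: "t \<in> {1..N}"
    show "chi (K + int t) t w = 0" using a' t by blast
    fix m assume m: "m < K + int t"
    show "int (j m t w) + m \<le> K + int t"
    proof (cases "m < K - int L")
      case True
      then show ?thesis using b'[OF t True] by linarith
    next
      case False
      then have "m \<in> {K - int L..<K + int t}" using m by simp
      then show ?thesis using a' t by blast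
    qed
  qed
qed

lemma sep_dir:
  fixes K :: "nat \<Rightarrow> int" and L :: "nat \<Rightarrow> nat"
  assumes disj: "\<And>i i'. i < i' \<Longrightarrow> K i + int N < K i' - int (L i') \<or> K i' + int N < K i - int (L i)"
    and Lge: "\<And>i. i \<le> L i"
  shows "AE w in M. \<forall>n. \<exists>i\<ge>n. separating N chi j w (K i)"
proof -
  have a: "AE w in M. \<forall>n. \<exists>i\<ge>n. w \<in> Aset (K i) (L i)" by (rule AEA) (rule disj)
  have b: "AE w in M. \<exists>n. \<forall>i\<ge>n. w \<notin> Bset (K i) (L i)" by (rule AEB) (rule Lge)
  from a b show ?thesis
proof eventually_elim
  case (elim w)
  show ?case
  proof
    fix n
    obtain n0 where n0: "\<forall>i\<ge>n0. w \<notin> Bset (K i) (L i)" using elim(2) by blast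
    obtain i where i: "i \<ge> max n n0" "w \<in> Aset (K i) (L i)" using elim(1) by blast
    then have "separating N chi j w (K i)" using n0 sep_of by simp
    then show "\<exists>i\<ge>n. separating N chi j w (K i)" using i(1) by auto
  qed
qed
qed

end

theorem lemma2p3:
  fixes M :: "'a measure" and b1 b2 :: real and N :: nat
    and chi j :: "int \<Rightarrow> nat \<Rightarrow> 'a \<Rightarrow> nat"
  assumes "prob_space M"
    and "0 < b1" and "b1 < b2" and "b2 < 1" and "N \<ge> 1"
    and "prob_space.indep_vars M (\<lambda>_. count_space UNIV)
           (case_sum (\<lambda>(x, t). chi x t) (\<lambda>(x, t). j x t))
           ((UNIV \<times> {1..N}) <+> (UNIV \<times> {1..N}))"
    and "\<forall>x. \<forall>t\<in>{1..N}. measure M {w \<in> space M. chi x t w = 1} = b1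
                       \<and> measure M {w \<in> space M. chi x t w = 0} = 1 - b1"
    and "\<forall>x. \<forall>t\<in>{1..N}. \<forall>r::nat. r \<ge> 1 \<longrightarrow>
           measure M {w \<in> space M. j x t w = r} = (1 - b2) * b2 ^ (r - 1)"
  shows "AE w in M. \<exists>R :: int \<Rightarrow> int. strict_mono R \<and> (\<forall>i. separating N chi j w (R i))"
proof -
  have "sepl M b1 b2 N chi j"
    unfolding sepl_def sepl_axioms_def using assms by auto
  then interpret S: sepl M b1 b2 N chi j .
  define Kp where "Kp i = int i * int i + int i * int N + int i" for i :: nat
  define Km where "Km i = - Kp i" for i :: nat
  have key: "(int i + 1) * (int i + 1 + int N) \<le> int i' * (int i' + int N)" if "i < i'" for i i' :: nat
    using that by (intro mult_mono) auto
  have dp: "Kp i + int N < Kp i' - int i' \<or> Kp i' + int N < Kp i - int i" if "i < i'" for i i'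
  proof -
    have "(int i + 1) * (int i + 1 + int N) = int i * int i + 2 * int i + 1 + int i * int N + int N"
      by (simp add: algebra_simps)
    moreover have "int i' * (int i' + int N) = int i' * int i' + int i' * int N" by (simp add: algebra_simps)
    ultimately show ?thesis using key[OF that] unfolding Kp_def by linarith
  qed
  have dm: "Km i + int N < Km i' - int i' \<or> Km i' + int N < Km i - int i" if "i < i'" for i i'
  proof -
    have "(int i + 1) * (int i + 1 + int N) = int i * int i + 2 * int i + 1 + int i * int N + int N"
      by (simp add: algebra_simps)
    moreover have "int i' * (int i' + int N) = int i' * int i' + int i' * int N" by (simp add: algebra_simps)
    ultimately show ?thesis using key[OF that] that unfolding Km_def Kp_def by linarith
  qed
  have Kp_ge: "int i \<le> Kp i" for i unfolding Kp_def by simp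
  have Km_le: "Km i \<le> - int i" for i unfolding Km_def using Kp_ge[of i] by simp
  have A1: "AE w in M. \<forall>n. \<exists>i\<ge>n. separating N chi j w (Kp i)"
    by (rule S.sep_dir[of Kp "\<lambda>i. i"]) (use dp in auto)
  have A2: "AE w in M. \<forall>n. \<exists>i\<ge>n. separating N chi j w (Km i)"
    by (rule S.sep_dir[of Km "\<lambda>i. i"]) (use dm in auto)
  from A1 A2 show ?thesis
  proof eventually_elim
    case (elim w)
    have up: "\<forall>b. \<exists>k\<in>{k. separating N chi j w k}. b < k"
    proof
      fix b :: int
      obtain i where "i \<ge> nat b + 1" "separating N chi j w (Kp i)" using elim(1) by blast
      moreover have "b < int i" using calculation(1) by linarith
      ultimately have "separating N chi j w (Kp i) \<and> b < Kp i" using Kp_ge[of i] by linarith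
      then show "\<exists>k\<in>{k. separating N chi j w k}. b < k" by blast
    qed
    have down: "\<forall>b. \<exists>k\<in>{k. separating N chi j w k}. k < b"
    proof
      fix b :: int
      obtain i where "i \<ge> nat (- b) + 1" "separating N chi j w (Km i)" using elim(2) by blast
      moreover have "- int i < b" using calculation(1) by linarith
      ultimately have "separating N chi j w (Km i) \<and> Km i < b" using Km_le[of i] by linarith
      then show "\<exists>k\<in>{k. separating N chi j w k}. k < b" by blast
    qed
    from mk_R[OF up down] obtain R :: "int \<Rightarrow> int" where "strict_mono R" "\<forall>i. R i \<in> {k. separating N chi j w k}"
      by blast
    then show ?case by blast
  qed
qed

end
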